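(* Fix integers $d\ge 1$, $N\ge 1$, $k\ge 1$, $a\in\{1,\dots,N\}$, $b\ge 2$ with $2^{b-1}>N$, a constant $m>0$, and power-law constants $\phi>0$, $\alpha<0$. Let $\mathbf{U}\in\mathbb{R}^d$ be a model-update vector whose entries, ranked in descending order of absolute value as $U\{1\},\dots,U\{d\}$, satisfy the power-law model $|U\{l\}|=\phi\, l^{\alpha}$ for $l=1,\dots,d$ (the paper's power-law assumption, used with equality in the bound), and let $f=\frac{2^{b-1}-N}{Nm}$. Define $$p_l=\frac{l^{\alpha}}{\sum_{l'=1}^d (l')^{\alpha}},\qquad q_l=1-(1-p_l)^k,\qquad r_l=\sum_{j=a}^{N}\binom{N}{j}q_l^{\,j}(1-q_l)^{N-j}.$$ Let $\Pi(\Theta(f\mathbf{U}))$ be the compressed vector obtained by: (i) quantizing each entry $fU_l$ of $f\mathbf{U}$ by the stochastic rounding $\theta$ below; (ii) multiplying the result by $v_l\in\{0,1\}$, where the coordinate holding the $l$-th largest entry $U\{l\}$ has $v_l=1$ with probability $r_l$ (the probability that at least $a$ of the $N$ clients voted for it, each client independently voting for it with probability $q_l$), the selection being independent of the rounding randomness. Then $$\mathbb{E}\big\|\Pi(\Theta(f\mathbf{U}))-f\mathbf{U}\big\|^2\le \gamma\,\|f\mathbf{U}\|^2,\qquad \gamma=1-\frac{\sum_{l=1}^d r_l\, l^{2\alpha}}{\sum_{l=1}^d l^{2\alpha}}+\frac{1}{4f^2}\,\frac{\sum_{l=1}^d r_l}{\phi^2\sum_{l=1}^d l^{2\alpha}}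.$$
   Context: Setting (FediAC in-network federated learning): $N$ clients each hold a model-update vector in $\mathbb{R}^d$. In the voting phase each client votes for $k$ coordinates by $k$ independent draws, the $l$-th largest (in absolute value) coordinate being drawn with probability $p_l$; a coordinate therefore receives that client's vote with probability $q_l$. A programmable switch sums the 0-1 vote arrays and keeps a coordinate (global index array entry $v_l=1$) iff it received at least $a$ votes, otherwise $v_l=0$. Stochastic integer rounding: for a real $x$, $\theta(x)=\lfloor x\rfloor$ with probability $\lceil x\rceil-x$ and $\theta(x)=\lceil x\rceil$ with probability $x-\lfloor x\rfloor$ (so $\mathbb{E}\theta(x)=x$); $\Theta$ applies $\theta$ entrywise. Sparsification $\Pi$ multiplies each entry by $v_l$. Here $m$ denotes the maximum absolute value of model updates and $f$ is the scaling factor applied before quantization to $b$-bit integers. *)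

theory Defs
  imports "HOL-Probability.Probability"
begin

definition theta_pmf :: "real \<Rightarrow> real pmf" where
  "theta_pmf x = map_pmf (\<lambda>up. if up then real_of_int \<lceil>x\<rceil> else real_of_int \<lfloor>x\<rfloor>)
                         (bernoulli_pmf (x - real_of_int \<lfloor>x\<rfloor>))"

definition fediac_p :: "real \<Rightarrow> nat \<Rightarrow> nat \<Rightarrow> real" where
  "fediac_p \<alpha> d l = real l powr \<alpha> / (\<Sum>l'=1..d. real l' powr \<alpha>)"

definition fediac_q :: "real \<Rightarrow> nat \<Rightarrow> nat \<Rightarrow> nat \<Rightarrow> real" where
  "fediac_q \<alpha> d k l = 1 - (1 - fediac_p \<alpha> d l) ^ k"

definition fediac_r :: "real \<Rightarrow> nat \<Rightarrow> nat \<Rightarrow> nat \<Rightarrow> nat \<Rightarrow> nat \<Rightarrow> real" where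
  "fediac_r \<alpha> d k N a l =
     (\<Sum>j=a..N. real (N choose j) * fediac_q \<alpha> d k l ^ j * (1 - fediac_q \<alpha> d k l) ^ (N - j))"

end

theory Submission
  imports Defs
begin

lemma r_bounds:
  assumes "l \<in> {1..d}"
  shows "0 \<le> fediac_r \<alpha> d k N a l \<and> fediac_r \<alpha> d k N a l \<le> 1"
proof -
  have pos: "\<forall>l'\<in>{1..d}. 0 < real l' powr \<alpha>" by auto
  have lp: "0 < real l powr \<alpha>" using assms by auto
  have le: "real l powr \<alpha> \<le> (\<Sum>l'=1..d. real l' powr \<alpha>)"
    using assms pos by (intro member_le_sum) auto
  have p0: "0 \<le> fediac_p \<alpha> d l" unfolding fediac_p_def using lp le
    by (intro divide_nonneg_nonneg; linarith)
  have p1: "fediac_p \<alpha> d l \<le> 1" unfolding fediac_p_def using lp le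
    by (subst divide_le_eq_1_pos) (use lp le in linarith)+
  define q where "q = fediac_q \<alpha> d k l"
  have q0: "0 \<le> q" unfolding q_def fediac_q_def using p0 p1
    by (simp add: power_le_one)
  have q1: "q \<le> 1" unfolding q_def fediac_q_def using p0 p1 by simp
  have tn: "\<And>j. 0 \<le> real (N choose j) * q ^ j * (1 - q) ^ (N - j)" using q0 q1 by simp
  have "fediac_r \<alpha> d k N a l = (\<Sum>j=a..N. real (N choose j) * q ^ j * (1 - q) ^ (N - j))"
    unfolding fediac_r_def q_def ..
  moreover have "(\<Sum>j=a..N. real (N choose j) * q ^ j * (1 - q) ^ (N - j))
      \<le> (\<Sum>j=0..N. real (N choose j) * q ^ j * (1 - q) ^ (N - j))"
    by (rule sum_mono2) (use tn in auto)
  moreover have "(\<Sum>j=0..N. real (N choose j) * q ^ j * (1 - q) ^ (N - j)) = 1"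
    using binomial_ring[of q "1 - q" N] by (simp add: atLeast0AtMost)
  moreover have "0 \<le> (\<Sum>j=a..N. real (N choose j) * q ^ j * (1 - q) ^ (N - j))"
    using tn by (simp add: sum_nonneg)
  ultimately show ?thesis by linarith
qed

lemma theta_var:
  fixes x :: real
  assumes that: "s = x - real_of_int \<lfloor>x\<rfloor>"
  shows "s * (real_of_int \<lceil>x\<rceil> - x)^2 + (1 - s) * (real_of_int \<lfloor>x\<rfloor> - x)^2 \<le> 1/4"
proof (cases "x = real_of_int \<lfloor>x\<rfloor>")
  case True
  then have "\<lceil>x\<rceil> = \<lfloor>x\<rfloor>" by (metis ceiling_of_int)
  then show ?thesis using True that by simp
next
  case False
  then have c: "real_of_int \<lceil>x\<rceil> = real_of_int \<lfloor>x\<rfloor> + 1"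
    by (metis ceiling_altdef of_int_1 of_int_add)
  have "s * (real_of_int \<lceil>x\<rceil> - x)^2 + (1 - s) * (real_of_int \<lfloor>x\<rfloor> - x)^2 = s * (1 - s)"
    unfolding c that by (simp add: power2_eq_square algebra_simps)
  also have "\<dots> = 1/4 - (s - 1/2)^2" by (simp add: power2_eq_square field_simps)
  also have "\<dots> \<le> 1/4" by simp
  finally show ?thesis .
qed

lemma coord_bound:
  fixes x p :: real
  assumes "0 \<le> p" "p \<le> 1"
  shows "measure_pmf.expectation (pair_pmf (bernoulli_pmf p) (theta_pmf x))
           (\<lambda>(v, t). ((if v then t else 0) - x)\<^sup>2) \<le> p / 4 + (1 - p) * x\<^sup>2"
proof -
  define s where "s = x - real_of_int \<lfloor>x\<rfloor>"
  define g where "g = (\<lambda>up. if up then real_of_int \<lceil>x\<rceil> else real_of_int \<lfloor>x\<rfloor>)"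
  have s0: "0 \<le> s" "s \<le> 1" unfolding s_def by linarith+
  have "pair_pmf (bernoulli_pmf p) (theta_pmf x)
      = map_pmf (\<lambda>(a, b). (id a, g b)) (pair_pmf (bernoulli_pmf p) (bernoulli_pmf s))"
    unfolding map_pair theta_pmf_def g_def s_def by simp
  then have "measure_pmf.expectation (pair_pmf (bernoulli_pmf p) (theta_pmf x))
           (\<lambda>(v, t). ((if v then t else 0) - x)\<^sup>2)
      = measure_pmf.expectation (pair_pmf (bernoulli_pmf p) (bernoulli_pmf s))
           (\<lambda>z. ((if fst z then g (snd z) else 0) - x)\<^sup>2)"
    by (simp add: split_beta)
  also have "\<dots> = (\<Sum>z\<in>{(True,True),(True,False),(False,True),(False,False)}. ((if fst z then g (snd z) else 0) - x)\<^sup>2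
                     * pmf (pair_pmf (bernoulli_pmf p) (bernoulli_pmf s)) z)"
    by (rule integral_measure_pmf_real) (simp, metis (full_types) insertCI prod.collapse)
  also have "\<dots> = p * (s * (real_of_int \<lceil>x\<rceil> - x)^2 + (1 - s) * (real_of_int \<lfloor>x\<rfloor> - x)^2)
                  + (1 - p) * x\<^sup>2"
    using assms s0 by (simp add: pmf_pair g_def algebra_simps)
  also have "\<dots> \<le> p * (1/4) + (1 - p) * x\<^sup>2"
    using theta_var[OF s_def] assms by (intro add_mono mult_left_mono) auto
  finally show ?thesis by simp
qed



theorem proposition1:
  fixes d N k a b :: nat
    and m \<phi> \<alpha> f :: real
    and U :: "nat \<Rightarrow> real"
    and \<sigma> :: "nat \<Rightarrow> nat"
    and V :: "(nat \<Rightarrow> bool) pmf"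
  assumes "d \<ge> 1" and "N \<ge> 1" and "k \<ge> 1" and "a \<in> {1..N}"
    and "b \<ge> 2" and "2 ^ (b - 1) > N"
    and "m > 0" and "\<phi> > 0" and "\<alpha> < 0"
    and m_max: "\<forall>l\<in>{1..d}. \<bar>U l\<bar> \<le> m"
    and rank: "bij_betw \<sigma> {1..d} {1..d}"
    and power_law: "\<forall>l\<in>{1..d}. \<bar>U (\<sigma> l)\<bar> = \<phi> * real l powr \<alpha>"
    and f_def: "f = (2 ^ (b - 1) - real N) / (real N * m)"
    and vote: "\<forall>l\<in>{1..d}. map_pmf (\<lambda>v. v (\<sigma> l)) V = bernoulli_pmf (fediac_r \<alpha> d k N a l)"
  shows "measure_pmf.expectation
           (pair_pmf V (Pi_pmf {1..d} 0 (\<lambda>i. theta_pmf (f * U i))))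
           (\<lambda>(v, t). \<Sum>i=1..d. ((if v i then t i else 0) - f * U i)\<^sup>2)
         \<le> (1 - (\<Sum>l=1..d. fediac_r \<alpha> d k N a l * real l powr (2 * \<alpha>)) / (\<Sum>l=1..d. real l powr (2 * \<alpha>))
              + 1 / (4 * f\<^sup>2) * (\<Sum>l=1..d. fediac_r \<alpha> d k N a l)
                  / (\<phi>\<^sup>2 * (\<Sum>l=1..d. real l powr (2 * \<alpha>))))
           * (\<Sum>i=1..d. (f * U i)\<^sup>2)"
  proof -
  define T where "T = Pi_pmf {1..d} 0 (\<lambda>i. theta_pmf (f * U i))"
  define P where "P = pair_pmf V T"
  define R where "R = (\<lambda>l. fediac_r \<alpha> d k N a l)"
  define H where "H = (\<lambda>i (z :: bool \<times> real). ((if fst z then snd z else 0) - f * U i)\<^sup>2)"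
  define h where "h = (\<lambda>i (z :: (nat \<Rightarrow> bool) \<times> (nat \<Rightarrow> real)). ((if fst z i then snd z i else 0) - f * U i)\<^sup>2)"
  define S where "S = (\<Sum>l=1..d. real l powr (2 * \<alpha>))"
  have Rb: "\<And>l. l \<in> {1..d} \<Longrightarrow> 0 \<le> R l \<and> R l \<le> 1" unfolding R_def by (rule r_bounds)
  have sig: "\<And>l. l \<in> {1..d} \<Longrightarrow> \<sigma> l \<in> {1..d}" using rank bij_betwE by blast
  have surj: "\<And>i. i \<in> {1..d} \<Longrightarrow> \<exists>l\<in>{1..d}. i = \<sigma> l"
    using rank by (metis bij_betw_imp_surj_on imageE)
  have mp: "map_pmf (\<lambda>z. (fst z (\<sigma> l), snd z (\<sigma> l))) P
      = pair_pmf (bernoulli_pmf (R l)) (theta_pmf (f * U (\<sigma> l)))" if l: "l \<in> {1..d}" for l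
  proof -
    have "map_pmf (\<lambda>z. (fst z (\<sigma> l), snd z (\<sigma> l))) P
        = map_pmf (\<lambda>(v, t). ((\<lambda>v. v (\<sigma> l)) v, (\<lambda>t. t (\<sigma> l)) t)) (pair_pmf V T)"
      unfolding P_def by (rule map_pmf_cong) (auto simp: case_prod_beta)
    also have "\<dots> = pair_pmf (map_pmf (\<lambda>v. v (\<sigma> l)) V) (map_pmf (\<lambda>t. t (\<sigma> l)) T)"
      by (rule map_pair)
    also have "\<dots> = pair_pmf (bernoulli_pmf (R l)) (theta_pmf (f * U (\<sigma> l)))"
      using vote l sig[OF l] unfolding T_def R_def by (simp add: Pi_pmf_component)
    finally show ?thesis .
  qed
  have fin: "finite (set_pmf (pair_pmf (bernoulli_pmf p) (theta_pmf x)))" for p x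
  proof -
    have "finite (set_pmf (theta_pmf x))" unfolding theta_pmf_def by simp
    then show ?thesis by simp
  qed
  have hH: "h (\<sigma> l) = (\<lambda>z. H (\<sigma> l) ((\<lambda>z. (fst z (\<sigma> l), snd z (\<sigma> l))) z))" for l
    unfolding h_def H_def by (rule ext) (simp only: fst_conv snd_conv)
  have intg: "integrable P (h i)" if i: "i \<in> {1..d}" for i
  proof -
    obtain l where l: "l \<in> {1..d}" "i = \<sigma> l" using surj[OF i] by blast
    have "integrable (map_pmf (\<lambda>z. (fst z (\<sigma> l), snd z (\<sigma> l))) P) (H (\<sigma> l))"
      unfolding mp[OF l(1)] by (rule integrable_measure_pmf_finite[OF fin])
    then show ?thesis unfolding l(2) hH integrable_map_pmf_eq .
  qed
  have Eb: "measure_pmf.expectation P (h (\<sigma> l)) \<le> R l / 4 + (1 - R l) * (f * U (\<sigma> l))\<^sup>2"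
    if l: "l \<in> {1..d}" for l
  proof -
    have "measure_pmf.expectation P (h (\<sigma> l))
        = measure_pmf.expectation (map_pmf (\<lambda>z. (fst z (\<sigma> l), snd z (\<sigma> l))) P) (H (\<sigma> l))"
      unfolding hH by simp
    also have "\<dots> = measure_pmf.expectation (pair_pmf (bernoulli_pmf (R l)) (theta_pmf (f * U (\<sigma> l))))
           (\<lambda>(v, t). ((if v then t else 0) - f * U (\<sigma> l))\<^sup>2)"
      unfolding mp[OF l] H_def case_prod_beta' ..
    also have "\<dots> \<le> R l / 4 + (1 - R l) * (f * U (\<sigma> l))\<^sup>2"
      using Rb[OF l] by (intro coord_bound) auto
    finally show ?thesis .
  qed
  have fun_eq: "(\<lambda>(v, t). \<Sum>i=1..d. ((if v i then t i else 0) - f * U i)\<^sup>2) = (\<lambda>z. \<Sum>i=1..d. h i z)"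
    unfolding h_def by (auto simp: fun_eq_iff cong: if_cong split: prod.split)
  have "measure_pmf.expectation P (\<lambda>z. \<Sum>i=1..d. h i z) = (\<Sum>i=1..d. measure_pmf.expectation P (h i))"
    by (rule Bochner_Integration.integral_sum) (use intg in auto)
  also have "\<dots> = (\<Sum>l=1..d. measure_pmf.expectation P (h (\<sigma> l)))"
    using sum.reindex_bij_betw[OF rank, of "\<lambda>i. measure_pmf.expectation P (h i)"] by simp
  also have "\<dots> \<le> (\<Sum>l=1..d. R l / 4 + (1 - R l) * (f * U (\<sigma> l))\<^sup>2)"
    by (rule sum_mono) (rule Eb)
  finally have L: "measure_pmf.expectation P (\<lambda>z. \<Sum>i=1..d. h i z)
      \<le> (\<Sum>l=1..d. R l / 4 + (1 - R l) * (f * U (\<sigma> l))\<^sup>2)" .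
  have sq: "(f * U (\<sigma> l))\<^sup>2 = f\<^sup>2 * \<phi>\<^sup>2 * real l powr (2 * \<alpha>)" if l: "l \<in> {1..d}" for l
  proof -
    have "(f * U (\<sigma> l))\<^sup>2 = f\<^sup>2 * \<bar>U (\<sigma> l)\<bar>\<^sup>2" by (simp add: power_mult_distrib)
    also have "\<dots> = f\<^sup>2 * (\<phi> * real l powr \<alpha>)\<^sup>2" using power_law l by simp
    also have "\<dots> = f\<^sup>2 * \<phi>\<^sup>2 * real l powr (2 * \<alpha>)"
    proof -
      have "(real l powr \<alpha>)\<^sup>2 = real l powr \<alpha> * real l powr \<alpha>" by (rule power2_eq_square)
      also have "\<dots> = real l powr (\<alpha> + \<alpha>)" by (rule powr_add[symmetric])
      also have "\<alpha> + \<alpha> = 2 * \<alpha>" by simp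
      finally have e: "(real l powr \<alpha>)\<^sup>2 = real l powr (2 * \<alpha>)" .
      show ?thesis unfolding power_mult_distrib e by simp
    qed
    finally show ?thesis .
  qed
  have tot: "(\<Sum>i=1..d. (f * U i)\<^sup>2) = f\<^sup>2 * \<phi>\<^sup>2 * S"
  proof -
    have "(\<Sum>i=1..d. (f * U i)\<^sup>2) = (\<Sum>l=1..d. (f * U (\<sigma> l))\<^sup>2)"
      using sum.reindex_bij_betw[OF rank, of "\<lambda>i. (f * U i)\<^sup>2"] by simp
    also have "\<dots> = (\<Sum>l=1..d. f\<^sup>2 * \<phi>\<^sup>2 * real l powr (2 * \<alpha>))" by (rule sum.cong) (auto simp: sq)
    finally show ?thesis unfolding S_def by (simp add: sum_distrib_left)
  qed
  have R2: "(\<Sum>l=1..d. R l / 4 + (1 - R l) * (f * U (\<sigma> l))\<^sup>2)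
      = (\<Sum>l=1..d. R l) / 4 + f\<^sup>2 * \<phi>\<^sup>2 * (S - (\<Sum>l=1..d. R l * real l powr (2 * \<alpha>)))"
  proof -
    have "(\<Sum>l=1..d. R l / 4 + (1 - R l) * (f * U (\<sigma> l))\<^sup>2)
        = (\<Sum>l=1..d. R l / 4 + f\<^sup>2 * \<phi>\<^sup>2 * (real l powr (2 * \<alpha>) - R l * real l powr (2 * \<alpha>)))"
      by (rule sum.cong[OF refl]) (simp only: sq, simp add: algebra_simps)
    also have "\<dots> = (\<Sum>l=1..d. R l) / 4 + f\<^sup>2 * \<phi>\<^sup>2 * (S - (\<Sum>l=1..d. R l * real l powr (2 * \<alpha>)))"
      unfolding S_def sum.distrib sum_subtractf[symmetric] sum_distrib_left[symmetric] sum_divide_distrib[symmetric] ..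
    finally show ?thesis .
  qed
  have fpos: "f > 0" unfolding f_def using assms(2,6,7)
    by (intro divide_pos_pos) auto
  have Spos: "S > 0" unfolding S_def using assms(1)
    by (intro sum_pos) auto
  have "(\<Sum>l=1..d. R l) / 4 + f\<^sup>2 * \<phi>\<^sup>2 * (S - (\<Sum>l=1..d. R l * real l powr (2 * \<alpha>)))
      = (1 - (\<Sum>l=1..d. R l * real l powr (2 * \<alpha>)) / S
              + 1 / (4 * f\<^sup>2) * (\<Sum>l=1..d. R l) / (\<phi>\<^sup>2 * S)) * (f\<^sup>2 * \<phi>\<^sup>2 * S)"
    using fpos Spos assms(8) by (simp add: field_simps)
  then show ?thesis
    using L unfolding fun_eq[symmetric] P_def[symmetric] T_def[symmetric] tot R2
    unfolding R_def S_def by simp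
qed

end
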